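(* Let $r\ge1$ and $$\Psi(x^{-1},\hbar):=\sum_{n\ge0}\frac{x^{-rn}}{n!\,\hbar^n r^n}\prod_{j=1}^{rn-1}(1+j\hbar),$$ a formal power series in $x^{-1}$ (the principal specialization of the strictly monotone orbifold Hurwitz generating function). Then $$\Big[\hat x^{1/\hbar}\big(\hat y^r-\hat x\hat y+1\big)\hat x^{-1/\hbar}\Big]\Psi(x^{-1},\hbar)=0,\qquad\hat x=x\cdot,\ \hat y=-\hbar\frac{\partial}{\partial x},$$ equivalently $\big[(-\hbar\partial_x)^r+\hbar x\partial_x+1\big]\big(x^{-1/\hbar}\Psi\big)=0$ after multiplication by $x^{1/\hbar}$, i.e. $\big[(x^{-1}-\hbar\partial_x)^r+\hbar x\partial_x\big]\Psi=0$.
   Context: The empty product (for $n=0$ and, when $r=1$, for $n=1$) equals $1$. Conjugation by $x^{\pm1/\hbar}$ is understood formally: $x^{1/\hbar}\partial_x x^{-1/\hbar}=\partial_x-\frac{1}{\hbar x}$. *)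

theory Defs
  imports "HOL-Computational_Algebra.Formal_Power_Series"
begin

(* Formal power series in the variable z = x^{-1}; fps_X stands for x^{-1}.
   The parameter hbar is a nonzero element h of a field of characteristic 0. *)

(* d/dx acting on series in x^{-1}: since x = 1/z, d/dx = -z^2 d/dz *)
definition dx :: "'a::field_char_0 fps \<Rightarrow> 'a fps" where
  "dx f = - (fps_X ^ 2 * fps_deriv f)"

(* x * d/dx acting on series in x^{-1}: x d/dx = - z d/dz *)
definition x_dx :: "'a::field_char_0 fps \<Rightarrow> 'a fps" where
  "x_dx f = - (fps_X * fps_deriv f)"

definition opA :: "'a::field_char_0 \<Rightarrow> 'a fps \<Rightarrow> 'a fps" where
  "opA h f = fps_X * f - fps_const h * dx f"

definition Psi :: "nat \<Rightarrow> 'a::field_char_0 \<Rightarrow> 'a fps" where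
  "Psi r h = Abs_fps (\<lambda>m. if r dvd m then
      (\<Prod>j\<in>{1..<r * (m div r)}. 1 + of_nat j * h)
        / (fact (m div r) * h ^ (m div r) * of_nat r ^ (m div r))
    else 0)"

end

theory Submission
  imports Defs
begin

unbundle fps_syntax

lemma opA_nth0: "opA h f $ 0 = 0"
  by (simp add: opA_def dx_def power2_eq_square)

lemma opA_nthSuc: "opA h f $ Suc m = (1 + of_nat m * h) * f $ m"
proof -
  have "(fps_X ^ 2 * fps_deriv f) $ Suc m = of_nat m * f $ m"
    by (cases m) (simp_all add: fps_X_power_mult_nth)
  thus ?thesis by (simp add: opA_def dx_def algebra_simps)
qed

lemma opA_pow_nth:
  "((opA h) ^^ k) f $ n = (if n < k then 0 else
     (\<Prod>i<k. (1 + of_nat (n - k + i) * h)) * f $ (n - k))"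
proof (induction k arbitrary: n)
  case 0 thus ?case by simp
next
  case (Suc k)
  note IH = Suc.IH
  show ?case
  proof (cases n)
    case 0 thus ?thesis by (simp add: opA_nth0)
  next
    case (Suc m)
    have "((opA h) ^^ Suc k) f $ n = (1 + of_nat m * h) * ((opA h ^^ k) f) $ m"
      using Suc by (simp add: opA_nthSuc)
    also have "\<dots> = (if n < Suc k then 0 else
     (\<Prod>i<Suc k. (1 + of_nat (n - Suc k + i) * h)) * f $ (n - Suc k))"
      using Suc IH[of m] by (auto simp: prod.lessThan_Suc Suc_diff_le)
    finally show ?thesis .
  qed
qed

lemma prod_split: "(\<Prod>j<(a::nat). g j) * (\<Prod>i<(b::nat). g (a + i)) = (\<Prod>j<a + b. (g j :: 'a::comm_monoid_mult))"
  by (induction b) (simp_all add: prod.lessThan_Suc mult.assoc[symmetric])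

lemma prod_from1:
  fixes h :: "'a::field_char_0"
  shows "(\<Prod>j\<in>{1..<N}. 1 + of_nat j * h) = (\<Prod>j<N. 1 + of_nat j * h)"
proof (cases N)
  case 0 thus ?thesis by simp
next
  case (Suc M)
  have "{..<N} = insert 0 {1..<N}" using Suc by auto
  thus ?thesis by simp
qed

lemma prod_from1':
  fixes h :: "'a::field_char_0"
  shows "(\<Prod>j\<in>{Suc 0..<N}. 1 + of_nat j * h) = (\<Prod>j<N. 1 + of_nat j * h)"
  using prod_from1[where N=N and h=h] by simp

theorem proposition7p1:
  fixes r :: nat and h :: "'a::field_char_0"
  assumes "r \<ge> 1" and "h \<noteq> 0"
  shows "((opA h) ^^ r) (Psi r h) + fps_const h * x_dx (Psi r h) = 0"
proof (rule fps_ext)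
  fix n
  let ?P = "Psi r h"
  have xd: "(fps_const h * x_dx ?P) $ n = - (h * of_nat n * ?P $ n)"
    by (cases n) (simp_all add: x_dx_def algebra_simps)
  have key: "((opA h) ^^ r) ?P $ n = h * of_nat n * ?P $ n"
  proof (cases "n < r")
    case True
    hence "n = 0 \<or> \<not> r dvd n" using assms by (auto dest: dvd_imp_le)
    thus ?thesis using True by (auto simp: opA_pow_nth Psi_def)
  next
    case False
    show ?thesis
    proof (cases "r dvd n")
      case nd: False
      hence "\<not> r dvd (n - r)" using False
        by (metis dvd_diff_nat dvd_refl le_add_diff_inverse2 not_less dvd_add)
      thus ?thesis using False nd by (simp add: opA_pow_nth Psi_def)
    next
      case True
      then obtain q where q: "n - r = r * q" "n = r * q + r" using False
        by (metis add.commute dvd_def dvd_diff_nat dvd_refl le_add_diff_inverse not_less)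
      have r0: "r \<noteq> 0" using assms by simp
      have d1: "(n - r) div r = q" using q r0 by simp
      have d2: "n div r = Suc q" using q r0
        by (metis div_mult_self1_is_m mult.commute mult_Suc_right zero_less_iff_neq_zero add.commute)
      have rs: "r * Suc q = r * q + r" by simp
      define G where "G = (\<lambda>j::nat. 1 + of_nat j * h)"
      have ps: "(\<Prod>j<r * q. G j) * (\<Prod>i<r. G (r*q + i)) = (\<Prod>j<r*q + r. G j)"
        by (rule prod_split)
      have lhs: "((opA h) ^^ r) ?P $ n =
          (\<Prod>j<r*q + r. G j) / (fact q * h ^ q * of_nat r ^ q)"
      proof -
        have "((opA h) ^^ r) ?P $ n = (\<Prod>i<r. G (r*q + i)) * ?P $ (r*q)"
          using False q by (simp add: opA_pow_nth G_def)
        also have "?P $ (r*q) = (\<Prod>j<r * q. G j) / (fact q * h ^ q * of_nat r ^ q)"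
          using r0 by (simp add: Psi_def prod_from1 prod_from1' G_def)
        finally show ?thesis using ps by (simp add: mult.commute)
      qed
      have rhs: "?P $ n = (\<Prod>j<r*q + r. G j) / (fact (Suc q) * h ^ Suc q * of_nat r ^ Suc q)"
        using True d2 by (simp add: Psi_def prod_from1 prod_from1' G_def add.commute)
      have nn: "(of_nat n :: 'a) = of_nat r * (of_nat q + 1)" using q by (simp add: algebra_simps)
      define PP where "PP = (\<Prod>j<r*q + r. G j)"
      define F where "F = (fact q :: 'a)"
      define H where "H = h ^ q"
      define R where "R = (of_nat r :: 'a) ^ q"
      have nz: "F \<noteq> 0" "H \<noteq> 0" "R \<noteq> 0" "(of_nat r :: 'a) \<noteq> 0" "(of_nat q + 1 :: 'a) \<noteq> 0"
        using assms r0 unfolding F_def H_def R_def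
        by (simp_all, metis of_nat_Suc of_nat_eq_0_iff nat.distinct(1) add.commute)
      have fs: "(fact (Suc q) :: 'a) = (of_nat q + 1) * F" unfolding F_def by (simp add: fact_Suc)
      have "h * (of_nat r * (of_nat q + 1)) * (PP / ((of_nat q + 1) * F * (h * H) * (of_nat r * R)))
            = PP / (F * H * R)"
      proof -
        define c where "c = h * (of_nat r * (of_nat q + 1 :: 'a))"
        have c0: "c \<noteq> 0" using nz assms unfolding c_def by simp
        have D: "(of_nat q + 1) * F * (h * H) * (of_nat r * R) = c * (F * H * R)"
          unfolding c_def by (simp add: ac_simps)
        show ?thesis unfolding D c_def[symmetric] using c0 by simp
      qed
      thus ?thesis unfolding lhs rhs nn fs
        by (simp add: PP_def F_def H_def R_def mult.assoc)
    qed
  qed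
  show "(((opA h) ^^ r) ?P + fps_const h * x_dx ?P) $ n = 0 $ n"
    using key xd by simp
qed

end
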